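(* Let $X_{j,i}\in\Theta$ ($1\le j\le m$, $1\le i\le n_j$) be data, let $k_1,\dots,k_m\ge 1$ and $M\ge1$ be integers, and let $P^j_{n_j}=\frac{1}{n_j}\sum_{i=1}^{n_j}\delta_{X_{j,i}}$. For $\vec G=(G_1,\dots,G_m)$ with $G_j\in\mathcal{O}_{k_j}(\Theta)$ and $\boldsymbol H=(H_1,\dots,H_M)$ with $H_i\in\mathcal{P}_2(\Theta)$, define $$f(\vec G,\boldsymbol H)=\sum_{j=1}^m\Big[W_2^2(G_j,P^j_{n_j})+\tfrac1m d_{W_2}^2(G_j,\boldsymbol H)\Big].$$ Consider one iteration of the Multilevel Wasserstein Means algorithm started from $(\vec G^{(t)},\boldsymbol H^{(t)})$: (1) for each $j$, let $i_j\in\arg\min_{1\le u\le M}W_2^2(G^{(t)}_j,H^{(t)}_u)$ and let $G^{(t+1)}_j$ be a minimizer over $G\in\mathcal{O}_{k_j}(\Theta)$ of $W_2^2(G,P^j_{n_j})+W_2^2(G,H^{(t)}_{i_j})/m$; (2) for each $j$, let $i'_j\in\arg\min_{1\le u\le M}W_2^2(G^{(t+1)}_j,H^{(t)}_u)$, set $C_i=\{l:i'_l=i\}$, and for each $i$ with $C_i\neq\emptyset$ let $H^{(t+1)}_i$ be a minimizer over $H\in\mathcal{P}_2(\Theta)$ of $\sum_{l\in C_i}W_2^2(H,G^{(t+1)}_l)$, while $H^{(t+1)}_i=H^{(t)}_i$ if $C_i=\emptyset$. Assuming all the minimizers above exist, $f(\vec G^{(t+1)},\boldsymbol H^{(t+1)})\le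 f(\vec G^{(t)},\boldsymbol H^{(t)})$. In particular the algorithm monotonically decreases the objective.
   Context: $\Theta\subset\mathbb{R}^d$; $\mathcal{P}_2(\Theta)$ is the set of Borel probability measures $G$ on $\Theta$ with $\int\|x\|^2dG(x)<\infty$. For $G,G'\in\mathcal{P}_2(\Theta)$, $W_2(G,G')=\big(\inf_{\pi\in\Pi(G,G')}\int\|x-y\|^2d\pi(x,y)\big)^{1/2}$, where $\Pi(G,G')$ is the set of couplings of $G$ and $G'$. $\mathcal{O}_k(\Theta)$ denotes the set of probability measures with at most $k$ support points in $\Theta$. For $\boldsymbol H=(H_1,\dots,H_M)$, $d_{W_2}^2(G,\boldsymbol H):=\min_{1\le i\le M}W_2^2(G,H_i)$. *)

theory Defs
  imports "HOL-Probability.Probability"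
begin

definition P2 :: "'a::euclidean_space set \<Rightarrow> 'a measure set" where
  "P2 \<Theta> = {G. prob_space G \<and> sets G = sets borel \<and> (AE x in G. x \<in> \<Theta>)
              \<and> integrable G (\<lambda>x. (norm x)\<^sup>2)}"

definition Ok :: "nat \<Rightarrow> 'a::euclidean_space set \<Rightarrow> 'a measure set" where
  "Ok k \<Theta> = {G. prob_space G \<and> sets G = sets borel \<and>
      (\<exists>S. finite S \<and> card S \<le> k \<and> S \<subseteq> \<Theta> \<and> emeasure G S = 1)}"

definition couplings :: "'a::euclidean_space measure \<Rightarrow> 'a measure \<Rightarrow> ('a \<times> 'a) measure set" where
  "couplings G G' = {\<pi>. sets \<pi> = sets (borel \<Otimes>\<^sub>M borel) \<and>
      distr \<pi> borel fst = G \<and> distr \<pi> borel snd = G'}"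

definition W2sq :: "'a::euclidean_space measure \<Rightarrow> 'a measure \<Rightarrow> ennreal" where
  "W2sq G G' = (INF \<pi>\<in>couplings G G'. \<integral>\<^sup>+ p. ennreal ((dist (fst p) (snd p))\<^sup>2) \<partial>\<pi>)"

definition dW2sq :: "'a::euclidean_space measure \<Rightarrow> (nat \<Rightarrow> 'a measure) \<Rightarrow> nat \<Rightarrow> ennreal" where
  "dW2sq G H M = (MIN i\<in>{1..M}. W2sq G (H i))"

definition empirical :: "nat \<Rightarrow> (nat \<Rightarrow> 'a::euclidean_space) \<Rightarrow> 'a measure" where
  "empirical n x = distr (uniform_count_measure {1..n}) borel x"

definition mwm_obj :: "nat \<Rightarrow> (nat \<Rightarrow> nat) \<Rightarrow> (nat \<Rightarrow> nat \<Rightarrow> 'a::euclidean_space) \<Rightarrow> nat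
    \<Rightarrow> (nat \<Rightarrow> 'a measure) \<Rightarrow> (nat \<Rightarrow> 'a measure) \<Rightarrow> ennreal" where
  "mwm_obj m n X M G H =
     (\<Sum>j=1..m. W2sq (G j) (empirical (n j) (X j)) + dW2sq (G j) H M / of_nat m)"

end

theory Submission
  imports Defs
begin
lemma W2sq_le_sym: "W2sq G G' \<le> W2sq G' G"
proof -
  have "\<exists>\<pi>'\<in>couplings G G'. (\<integral>\<^sup>+ p. ennreal ((dist (fst p) (snd p))\<^sup>2) \<partial>\<pi>') \<le> (\<integral>\<^sup>+ p. ennreal ((dist (fst p) (snd p))\<^sup>2) \<partial>\<pi>)"
    if "\<pi> \<in> couplings G' G" for \<pi>
  proof -
    have s: "sets \<pi> = sets (borel \<Otimes>\<^sub>M borel)" and f: "distr \<pi> borel fst = G'" and g: "distr \<pi> borel snd = G"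
      using that by (auto simp: couplings_def)
    have mswap: "(\<lambda>(x,y). (y, x)) \<in> measurable \<pi> (borel \<Otimes>\<^sub>M borel)"
      using measurable_cong_sets[OF s refl] measurable_pair_swap'[of borel borel] by blast
    define \<pi>' where "\<pi>' = distr \<pi> (borel \<Otimes>\<^sub>M borel) (\<lambda>(x,y). (y, x))"
    have mfst: "fst \<in> measurable (borel \<Otimes>\<^sub>M borel) (borel::'a measure)" by simp
    have msnd: "snd \<in> measurable (borel \<Otimes>\<^sub>M borel) (borel::'a measure)" by simp
    have "distr \<pi>' borel fst = distr \<pi> borel (fst \<circ> (\<lambda>(x,y). (y, x)))"
      unfolding \<pi>'_def by (rule distr_distr[OF mfst mswap])
    also have "fst \<circ> (\<lambda>(x,y). (y, x)) = snd" by auto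
    finally have 1: "distr \<pi>' borel fst = G" using g by simp
    have "distr \<pi>' borel snd = distr \<pi> borel (snd \<circ> (\<lambda>(x,y). (y, x)))"
      unfolding \<pi>'_def by (rule distr_distr[OF msnd mswap])
    also have "snd \<circ> (\<lambda>(x,y). (y, x)) = fst" by auto
    finally have 2: "distr \<pi>' borel snd = G'" using f by simp
    have 3: "\<pi>' \<in> couplings G G'" using 1 2 by (simp add: couplings_def \<pi>'_def)
    have mf: "(\<lambda>p. ennreal ((dist (fst p) (snd p))\<^sup>2)) \<in> borel_measurable (borel \<Otimes>\<^sub>M (borel::'a measure))"
      by measurable
    have "(\<integral>\<^sup>+ p. ennreal ((dist (fst p) (snd p))\<^sup>2) \<partial>\<pi>') = (\<integral>\<^sup>+ p. ennreal ((dist (fst ((\<lambda>(x,y). (y, x)) p)) (snd ((\<lambda>(x,y). (y, x)) p)))\<^sup>2) \<partial>\<pi>)"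
      unfolding \<pi>'_def by (rule nn_integral_distr[OF mswap]) (simp add: mf)
    also have "\<dots> = (\<integral>\<^sup>+ p. ennreal ((dist (fst p) (snd p))\<^sup>2) \<partial>\<pi>)"
      by (simp add: case_prod_beta dist_commute)
    finally show ?thesis by (intro bexI[OF _ 3]) simp
  qed
  then show ?thesis unfolding W2sq_def
    by (meson INF_greatest INF_lower2)
qed
lemma W2sq_sym: "W2sq G G' = W2sq G' G"
  by (simp add: W2sq_le_sym antisym)

theorem theorem3p1:
  fixes \<Theta> :: "'a::euclidean_space set"
    and m M :: nat and n k :: "nat \<Rightarrow> nat"
    and X :: "nat \<Rightarrow> nat \<Rightarrow> 'a"
    and G G' H H' :: "nat \<Rightarrow> 'a measure"
    and idx idx' :: "nat \<Rightarrow> nat"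
  assumes m_pos: "m \<ge> 1" and M_pos: "M \<ge> 1"
    and n_pos: "\<forall>j\<in>{1..m}. n j \<ge> 1"
    and k_pos: "\<forall>j\<in>{1..m}. k j \<ge> 1"
    and X_in: "\<forall>j\<in>{1..m}. \<forall>i\<in>{1..n j}. X j i \<in> \<Theta>"
    and G_in: "\<forall>j\<in>{1..m}. G j \<in> Ok (k j) \<Theta>"
    and H_in: "\<forall>i\<in>{1..M}. H i \<in> P2 \<Theta>"
    and idx_range: "\<forall>j\<in>{1..m}. idx j \<in> {1..M}"
    and idx_min: "\<forall>j\<in>{1..m}. \<forall>u\<in>{1..M}. W2sq (G j) (H (idx j)) \<le> W2sq (G j) (H u)"
    and G'_in: "\<forall>j\<in>{1..m}. G' j \<in> Ok (k j) \<Theta>"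
    and G'_min: "\<forall>j\<in>{1..m}. \<forall>F\<in>Ok (k j) \<Theta>.
        W2sq (G' j) (empirical (n j) (X j)) + W2sq (G' j) (H (idx j)) / of_nat m
        \<le> W2sq F (empirical (n j) (X j)) + W2sq F (H (idx j)) / of_nat m"
    and idx'_range: "\<forall>j\<in>{1..m}. idx' j \<in> {1..M}"
    and idx'_min: "\<forall>j\<in>{1..m}. \<forall>u\<in>{1..M}. W2sq (G' j) (H (idx' j)) \<le> W2sq (G' j) (H u)"
    and H'_nonempty: "\<forall>i\<in>{1..M}. {l\<in>{1..m}. idx' l = i} \<noteq> {} \<longrightarrow>
        H' i \<in> P2 \<Theta> \<and>
        (\<forall>F\<in>P2 \<Theta>. (\<Sum>l\<in>{l\<in>{1..m}. idx' l = i}. W2sq (H' i) (G' l))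
                    \<le> (\<Sum>l\<in>{l\<in>{1..m}. idx' l = i}. W2sq F (G' l)))"
    and H'_empty: "\<forall>i\<in>{1..M}. {l\<in>{1..m}. idx' l = i} = {} \<longrightarrow> H' i = H i"
  shows "mwm_obj m n X M G' H' \<le> mwm_obj m n X M G H"
  proof -
  let ?P = "\<lambda>j. empirical (n j) (X j)"
  have fin: "finite {1..m}" by simp
  have dG: "dW2sq (G j) H M = W2sq (G j) (H (idx j))" if j: "j \<in> {1..m}" for j
    unfolding dW2sq_def using idx_range idx_min j
    by (intro antisym Min_le Min.boundedI) auto
  have dG': "dW2sq (G' j) H M = W2sq (G' j) (H (idx' j))" if j: "j \<in> {1..m}" for j
    unfolding dW2sq_def using idx'_range idx'_min j
    by (intro antisym Min_le Min.boundedI) auto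
  have dH': "dW2sq (G' j) H' M \<le> W2sq (H' (idx' j)) (G' j)" if j: "j \<in> {1..m}" for j
    unfolding dW2sq_def using idx'_range j W2sq_sym
    by (metis Min_le finite_atLeastAtMost finite_imageI image_eqI)
  have clus: "(\<Sum>j\<in>{1..m}. W2sq (H' (idx' j)) (G' j)) \<le> (\<Sum>j\<in>{1..m}. W2sq (H (idx' j)) (G' j))"
  proof -
    have "(\<Sum>j\<in>{1..m}. W2sq (H' (idx' j)) (G' j))
        = (\<Sum>i\<in>{1..M}. \<Sum>l\<in>{l\<in>{1..m}. idx' l = i}. W2sq (H' (idx' l)) (G' l))"
      using idx'_range by (intro sum.group[symmetric]) auto
    also have "\<dots> = (\<Sum>i\<in>{1..M}. \<Sum>l\<in>{l\<in>{1..m}. idx' l = i}. W2sq (H' i) (G' l))"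
      by (intro sum.cong refl) auto
    also have "\<dots> \<le> (\<Sum>i\<in>{1..M}. \<Sum>l\<in>{l\<in>{1..m}. idx' l = i}. W2sq (H i) (G' l))"
    proof (rule sum_mono)
      fix i assume i: "i \<in> {1..M}"
      show "(\<Sum>l\<in>{l\<in>{1..m}. idx' l = i}. W2sq (H' i) (G' l)) \<le> (\<Sum>l\<in>{l\<in>{1..m}. idx' l = i}. W2sq (H i) (G' l))"
      proof (cases "{l\<in>{1..m}. idx' l = i} = {}")
        case True then show ?thesis by (simp only: True sum.empty)
      next
        case False then show ?thesis using H'_nonempty H_in i by blast
      qed
    qed
    also have "\<dots> = (\<Sum>i\<in>{1..M}. \<Sum>l\<in>{l\<in>{1..m}. idx' l = i}. W2sq (H (idx' l)) (G' l))"
      by (intro sum.cong refl) auto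
    also have "\<dots> = (\<Sum>j\<in>{1..m}. W2sq (H (idx' j)) (G' j))"
      using idx'_range by (intro sum.group) auto
    finally show ?thesis .
  qed
  have divmono: "a \<le> b \<Longrightarrow> a / c \<le> b / (c::ennreal)" for a b c
    by (simp add: divide_ennreal_def mult_right_mono)
  have "mwm_obj m n X M G' H' = (\<Sum>j=1..m. W2sq (G' j) (?P j)) + (\<Sum>j=1..m. dW2sq (G' j) H' M) / of_nat m"
    unfolding mwm_obj_def by (simp add: sum.distrib divide_ennreal_def sum_distrib_right)
  also have "\<dots> \<le> (\<Sum>j=1..m. W2sq (G' j) (?P j)) + (\<Sum>j=1..m. W2sq (H' (idx' j)) (G' j)) / of_nat m"
    by (intro add_left_mono divmono sum_mono dH') auto
  also have "\<dots> \<le> (\<Sum>j=1..m. W2sq (G' j) (?P j)) + (\<Sum>j=1..m. W2sq (H (idx' j)) (G' j)) / of_nat m"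
    by (intro add_left_mono divmono clus)
  also have "\<dots> = (\<Sum>j=1..m. W2sq (G' j) (?P j) + W2sq (G' j) (H (idx' j)) / of_nat m)"
    by (simp add: sum.distrib divide_ennreal_def sum_distrib_right W2sq_sym)
  also have "\<dots> \<le> (\<Sum>j=1..m. W2sq (G' j) (?P j) + W2sq (G' j) (H (idx j)) / of_nat m)"
    using idx'_min idx_range by (intro sum_mono add_left_mono divmono) auto
  also have "\<dots> \<le> (\<Sum>j=1..m. W2sq (G j) (?P j) + W2sq (G j) (H (idx j)) / of_nat m)"
    using G'_min G_in by (intro sum_mono) auto
  also have "\<dots> = mwm_obj m n X M G H"
    unfolding mwm_obj_def by (intro sum.cong refl) (simp add: dG)
  finally show ?thesis .
qed

end
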